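(* In every execution of the Minimmit protocol (described in the context), if a block $b$ receives an L-notarization, then no block $b'\neq b$ with $b'.\text{view}=b.\text{view}$ receives an M-notarization.
   Context: Setting. There are $n$ processors $\Pi=\{p_0,\dots,p_{n-1}\}$ and an integer $f$ with $5f+1\le n$. At most $f$ processors may be corrupted by an adversary during the execution and then behave arbitrarily (Byzantine); processors never corrupted are called correct. Processors communicate over point-to-point authenticated channels; every message is signed by its sender; a PKI validates signatures and $H$ is a collision-resistant hash function; attention is restricted to executions in which the adversary cannot forge signatures or find hash collisions. Time is divided into timeslots $t\in\mathbb{N}_{\ge 0}$ (partial synchrony): a message sent at time $t$ arrives at some time $t'>t$ with $t'\le \max\{\text{GST},t\}+\Delta$, where $\Delta$ is known to the protocol and GST is unknown and chosen by the adversary (who also chooses delivery times subject to this constraint). Clocks of correct processors advance in real time. When a correct processor sends a message to all processors, it regards that message as immediately received by itself. Transactions are unique messages signed by the environment; each timeslot each processor may receive a finite set of transactions. Each processor $p_i$ maintains an append-only log $\text{log}_i$ of distinct transactions, $\text{log}_i(t)$ denoting its value at the end of timeslot $t$. Blocks. $\text{lead}(v):=p_j$ with $j=v \bmod n$. The genesis block is $b_{\text{gen}}=(0,\lambda,\lambda)$ ($\lambda$ the empty sequence). Any other block is a tuple $b=(v,\text{Tr},h)$ signed by $\text{lead}(v)$, with $v\in\mathbb{N}_{\ge1}$ ($b.\text{view}=v$, "a view $v$ block"), $\text{Tr}=b.\text{Tr}$ a sequence of distinct transactions, and $h=b.h$ a hash value; its parent is the block $b'$ with $H(b')=h$. The ancestors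 of $b$ are $b$ and the ancestors of its parent ($b_{\text{gen}}$ has only itself). Two blocks are inconsistent if neither is an ancestor of the other. To finalise $b$ means: upon obtaining all ancestors of $b$, the processor sets its log to extend the concatenation of $b'.\text{Tr}$ over ancestors $b'$ of $b$ (with duplicates removed). Messages. A vote for $b$ is $(\text{vote},b)$. An M-notarization for $b$ is a set of $2f+1$ votes for $b$ signed by distinct processors; an L-notarization for $b$ is a set of $n-f$ votes for $b$ signed by distinct processors. A nullify$(v)$ message is $(\text{nullify},v)$; a nullification for view $v$ is a set of $2f+1$ nullify$(v)$ messages signed by distinct processors. In the claim, a block $b$ "receives an M-notarization" if $b=b_{\text{gen}}$ or at least $2f+1$ processors send votes for $b$; $b$ "receives an L-notarization" if $b=b_{\text{gen}}$ or at least $n-f$ processors send votes for $b$; view $v$ "receives a nullification" if at least $2f+1$ processors send nullify$(v)$ messages. Local state of each processor: $\mathtt{S}$, the set of all received messages (automatically updated; it contains a block $b$ if it contains any message having $b$ as an entry; initially it contains only $b_{\text{gen}}$ and an M- and L-notarization for $b_{\text{gen}}$); the current view $\mathtt{v}$ (initially 1; a processor enters view $v$ when $\mathtt{v}$ becomes $v$); a timer $\mathtt{T}$ (initially 0, increasing in real time, reset to 0 upon entering a new view); $\mathtt{nullified}$ (initially false) and $\mathtt{notarized}$ (initially $\bot$, a value different from every block). SelectParent$(\mathtt{S},\mathtt{v})$: let $v'<\mathtt{v}$ be greatest such that $\mathtt{S}$ contains an M-notarization for some block of view $v'$; output the lexicographically least such block. ProposeChild$(b,v)$: form a sequence Tr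 of distinct transactions containing all transactions received and not in $b'.\text{Tr}$ for any ancestor $b'\in\mathtt{S}$ of $b$, and send the block $(v,\text{Tr},H(b))$ to all processors. $\mathtt{S}$ contains a valid proposal $b$ for view $v$ if $\mathtt{S}$ contains (i) precisely one block of the form $b=(v,\text{Tr},h)$ signed by $\text{lead}(v)$, (ii) an M-notarization for some $b'$ with $H(b')=h$, say $b'.\text{view}=v'$, and (iii) a nullification for each view in the open interval $(v',v)$. At timeslot $t$ a nullification $N\subseteq\mathtt{S}$ for a view $v$ is new if $\mathtt{S}$ contained no nullification for $v$ at any earlier timeslot and $N$ is lexicographically least among nullifications for $v$ in $\mathtt{S}$; new M-notarizations and new L-notarizations for a block $b$ are defined analogously. Protocol (Minimmit): at every timeslot, correct $p_i$ does, in order: (1) send new nullifications in $\mathtt{S}$ to all processors; (2) send new M- and L-notarizations in $\mathtt{S}$ to all; (3) if $p_i=\text{lead}(\mathtt{v})$, execute ProposeChild(SelectParent$(\mathtt{S},\mathtt{v}),\mathtt{v})$; (4) if $\mathtt{S}$ contains a valid proposal $b$ for view $\mathtt{v}$ and $\mathtt{notarized}=\bot$ and $\mathtt{nullified}=$ false, set $\mathtt{notarized}:=b$ and send $(\text{vote},b)$ to all; (5) if $\mathtt{T}=2\Delta$, $\mathtt{nullified}=$ false and $\mathtt{notarized}=\bot$, set $\mathtt{nullified}:=$ true and send $(\text{nullify},\mathtt{v})$ to all; (6) if $\mathtt{S}$ contains a nullification for $\mathtt{v}$, set $\mathtt{v}:=\mathtt{v}+1$, $\mathtt{nullified}:=$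 false, $\mathtt{notarized}:=\bot$; (7) if $\mathtt{S}$ contains an M-notarization for some $b$ with $b.\text{view}=\mathtt{v}$: if $\mathtt{notarized}=\bot$ and $\mathtt{nullified}=$ false send $(\text{vote},b)$ to all; then set $\mathtt{v}:=\mathtt{v}+1$, $\mathtt{nullified}:=$ false, $\mathtt{notarized}:=\bot$; (8) if $\mathtt{nullified}=$ false, $\mathtt{notarized}\neq\bot$, and $\mathtt{S}$ contains at least $2f+1$ messages signed by distinct processors, each either $(\text{nullify},\mathtt{v})$ or $(\text{vote},b)$ for some $b$ with $b.\text{view}=\mathtt{v}$ and $b\ne\mathtt{notarized}$, then set $\mathtt{nullified}:=$ true and send $(\text{nullify},\mathtt{v})$ to all; (9) if $\mathtt{S}$ contains a new L-notarization for a block $b$, finalise $b$. *)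

theory Defs
  imports Main "HOL-Library.List_Lexorder" "HOL-Library.Product_Lexorder" "HOL-Library.Option_ord"
begin

text \<open>Processors are natural numbers p < n (p_j is j).  A block is a triple
  (view, Tr, h); the hash component of the genesis block is the empty sequence,
  modelled as None, all other blocks carry Some hash.\<close>

type_synonym ('tx, 'h) block = "nat \<times> 'tx list \<times> 'h option"

definition genesis :: "('tx, 'h) block" where
  "genesis = (0, [], None)"

definition bview :: "('tx, 'h) block \<Rightarrow> nat" where
  "bview b = fst b"

definition btr :: "('tx, 'h) block \<Rightarrow> 'tx list" where
  "btr b = fst (snd b)"

definition bhash :: "('tx, 'h) block \<Rightarrow> 'h option" where
  "bhash b = snd (snd b)"

definition lead :: "nat \<Rightarrow> nat \<Rightarrow> nat" where
  "lead n v = v mod n"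

definition wf_block :: "('tx, 'h) block \<Rightarrow> bool" where
  "wf_block b \<longleftrightarrow> b = genesis \<or> (bview b \<ge> 1 \<and> distinct (btr b) \<and> bhash b \<noteq> None)"

text \<open>Payloads of signed messages: votes, nullify messages, and blocks
  (a block is signed by the leader of its view).\<close>
datatype ('tx, 'h) payload = Vote "('tx, 'h) block" | Nullify nat | Prop "('tx, 'h) block"

text \<open>A signed message: (signer, payload).  A packet is a set of signed messages
  sent (and delivered) together, e.g. a forwarded notarization.\<close>
type_synonym ('tx, 'h) msg = "nat \<times> ('tx, 'h) payload"
type_synonym ('tx, 'h) packet = "('tx, 'h) msg set"

definition wf_msg :: "nat \<Rightarrow> ('tx, 'h) msg \<Rightarrow> bool" where
  "wf_msg n m \<longleftrightarrow> fst m < n \<and>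
     (case snd m of
        Vote b \<Rightarrow> wf_block b
      | Nullify v \<Rightarrow> True
      | Prop b \<Rightarrow> wf_block b \<and> b \<noteq> genesis \<and> fst m = lead n (bview b))"

fun payload_blocks :: "('tx, 'h) payload \<Rightarrow> ('tx, 'h) block set" where
  "payload_blocks (Vote b) = {b}"
| "payload_blocks (Nullify v) = {}"
| "payload_blocks (Prop b) = {b}"

definition blocks_in :: "('tx, 'h) msg set \<Rightarrow> ('tx, 'h) block set" where
  "blocks_in S = insert genesis {b. \<exists>s. (s, Vote b) \<in> S \<or> (s, Prop b) \<in> S}"

definition vote_signers :: "nat \<Rightarrow> ('tx, 'h) msg set \<Rightarrow> ('tx, 'h) block \<Rightarrow> nat set" where
  "vote_signers n S b = {p. p < n \<and> (p, Vote b) \<in> S}"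

definition null_signers :: "nat \<Rightarrow> ('tx, 'h) msg set \<Rightarrow> nat \<Rightarrow> nat set" where
  "null_signers n S v = {p. p < n \<and> (p, Nullify v) \<in> S}"

definition has_M :: "nat \<Rightarrow> nat \<Rightarrow> ('tx, 'h) msg set \<Rightarrow> ('tx, 'h) block \<Rightarrow> bool" where
  "has_M n f S b \<longleftrightarrow> b = genesis \<or> 2 * f + 1 \<le> card (vote_signers n S b)"

definition has_L :: "nat \<Rightarrow> nat \<Rightarrow> ('tx, 'h) msg set \<Rightarrow> ('tx, 'h) block \<Rightarrow> bool" where
  "has_L n f S b \<longleftrightarrow> b = genesis \<or> n - f \<le> card (vote_signers n S b)"

definition has_N :: "nat \<Rightarrow> nat \<Rightarrow> ('tx, 'h) msg set \<Rightarrow> nat \<Rightarrow> bool" where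
  "has_N n f S v \<longleftrightarrow> 2 * f + 1 \<le> card (null_signers n S v)"

text \<open>The lexicographically least k-element subset of a set of signers
  (a notarization/nullification is determined by its set of signers).\<close>
definition least_subset :: "nat set \<Rightarrow> nat \<Rightarrow> nat set" where
  "least_subset P k = (ARG_MIN sorted_list_of_set Q. Q \<subseteq> P \<and> card Q = k)"

text \<open>Ancestry: a is an ancestor of b if a is reached from b by following parent hashes.\<close>
definition is_ancestor :: "(('tx, 'h) block \<Rightarrow> 'h) \<Rightarrow> ('tx, 'h) block \<Rightarrow> ('tx, 'h) block \<Rightarrow> bool" where
  "is_ancestor H a b \<longleftrightarrow> (b, a) \<in> {(x, y). bhash x = Some (H y)}\<^sup>*"

definition select_parent ::
  "nat \<Rightarrow> nat \<Rightarrow> ('tx::linorder, 'h::linorder) msg set \<Rightarrow> nat \<Rightarrow> ('tx, 'h) block" where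
  "select_parent n f S v =
     (let v' = (GREATEST w. w < v \<and> (\<exists>b \<in> blocks_in S. bview b = w \<and> has_M n f S b))
      in Min {b \<in> blocks_in S. bview b = v' \<and> has_M n f S b})"

definition valid_proposal ::
  "nat \<Rightarrow> nat \<Rightarrow> (('tx, 'h) block \<Rightarrow> 'h) \<Rightarrow> ('tx, 'h) msg set \<Rightarrow> nat \<Rightarrow> ('tx, 'h) block \<Rightarrow> bool" where
  "valid_proposal n f H S v b \<longleftrightarrow>
     b \<in> blocks_in S \<and> bview b = v \<and> (\<forall>b' \<in> blocks_in S. bview b' = v \<longrightarrow> b' = b) \<and>
     (\<exists>b'. bhash b = Some (H b') \<and> has_M n f S b' \<and>
           (\<forall>w. bview b' < w \<and> w < v \<longrightarrow> has_N n f S w))"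

record ('tx, 'h) lstate =
  lS :: "('tx, 'h) msg set"
  lview :: nat
  lentered :: nat       \<comment> \<open>timeslot at which the current view was entered; timer T = t - lentered\<close>
  lnullified :: bool
  lnotarized :: "('tx, 'h) block option"   \<comment> \<open>None plays the role of bottom\<close>
  lrtx :: "'tx set"      \<comment> \<open>transactions received so far\<close>

definition init_state :: "('tx, 'h) lstate" where
  "init_state = \<lparr>lS = {}, lview = 1, lentered = 0, lnullified = False, lnotarized = None, lrtx = {}\<rparr>"

text \<open>Send a packet to all processors: it is recorded in the outbox and
  immediately counted as received by the sender itself.\<close>
definition bcast :: "('tx, 'h) packet \<Rightarrow> ('tx, 'h) lstate \<times> ('tx, 'h) packet set
                     \<Rightarrow> ('tx, 'h) lstate \<times> ('tx, 'h) packet set" where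
  "bcast pk so = (fst so\<lparr>lS := lS (fst so) \<union> pk\<rparr>, insert pk (snd so))"

definition enter_next :: "nat \<Rightarrow> ('tx, 'h) lstate \<Rightarrow> ('tx, 'h) lstate" where
  "enter_next t st = st\<lparr>lview := Suc (lview st), lnullified := False, lnotarized := None, lentered := t\<rparr>"

text \<open>Steps (1) and (2): forward new nullifications and new M-/L-notarizations.
  Sprev is the value of S at the end of the previous timeslot.\<close>
definition step12 :: "nat \<Rightarrow> nat \<Rightarrow> ('tx, 'h) msg set \<Rightarrow> ('tx, 'h) lstate \<times> ('tx, 'h) packet set
                      \<Rightarrow> ('tx, 'h) lstate \<times> ('tx, 'h) packet set" where
  "step12 n f Sprev so =
     (let S = lS (fst so);
          NN = {(\<lambda>p. (p, Nullify v)) ` least_subset (null_signers n S v) (2 * f + 1) | v.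
                  has_N n f S v \<and> \<not> has_N n f Sprev v};
          MM = {(\<lambda>p. (p, Vote b)) ` least_subset (vote_signers n S b) (2 * f + 1) | b.
                  b \<noteq> genesis \<and> has_M n f S b \<and> \<not> has_M n f Sprev b};
          LL = {(\<lambda>p. (p, Vote b)) ` least_subset (vote_signers n S b) (n - f) | b.
                  b \<noteq> genesis \<and> has_L n f S b \<and> \<not> has_L n f Sprev b}
      in (fst so, snd so \<union> NN \<union> MM \<union> LL))"

text \<open>Step (3): ProposeChild(SelectParent(S, v), v).  The sequence Tr is produced by
  mk_tr from the set R of received transactions and the set X of received
  transactions not contained in any ancestor in S of the parent.\<close>
definition step3 :: "nat \<Rightarrow> nat \<Rightarrow> (('tx::linorder, 'h::linorder) block \<Rightarrow> 'h) \<Rightarrow> nat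
                     \<Rightarrow> ('tx set \<Rightarrow> 'tx set \<Rightarrow> 'tx list)
                     \<Rightarrow> ('tx, 'h) lstate \<times> ('tx, 'h) packet set \<Rightarrow> ('tx, 'h) lstate \<times> ('tx, 'h) packet set" where
  "step3 n f H p mk_tr so =
     (let st = fst so; S = lS st; v = lview st in
      if p = lead n v then
        (let par = select_parent n f S v;
             X = {x \<in> lrtx st. \<forall>b' \<in> blocks_in S. is_ancestor H b' par \<longrightarrow> x \<notin> set (btr b')};
             blk = (v, mk_tr (lrtx st) X, Some (H par))
         in bcast {(p, Prop blk)} so)
      else so)"

definition step4 :: "nat \<Rightarrow> nat \<Rightarrow> (('tx, 'h) block \<Rightarrow> 'h) \<Rightarrow> nat
                     \<Rightarrow> ('tx, 'h) lstate \<times> ('tx, 'h) packet set \<Rightarrow> ('tx, 'h) lstate \<times> ('tx, 'h) packet set" where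
  "step4 n f H p so =
     (let st = fst so; S = lS st; v = lview st in
      if (\<exists>b. valid_proposal n f H S v b) \<and> lnotarized st = None \<and> \<not> lnullified st then
        (let b = (THE b. valid_proposal n f H S v b)
         in bcast {(p, Vote b)} (st\<lparr>lnotarized := Some b\<rparr>, snd so))
      else so)"

definition step5 :: "nat \<Rightarrow> nat \<Rightarrow> nat
                     \<Rightarrow> ('tx, 'h) lstate \<times> ('tx, 'h) packet set \<Rightarrow> ('tx, 'h) lstate \<times> ('tx, 'h) packet set" where
  "step5 \<Delta> t p so =
     (let st = fst so in
      if t - lentered st = 2 * \<Delta> \<and> \<not> lnullified st \<and> lnotarized st = None then
        bcast {(p, Nullify (lview st))} (st\<lparr>lnullified := True\<rparr>, snd so)
      else so)"

definition step6 :: "nat \<Rightarrow> nat \<Rightarrow> nat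
                     \<Rightarrow> ('tx, 'h) lstate \<times> ('tx, 'h) packet set \<Rightarrow> ('tx, 'h) lstate \<times> ('tx, 'h) packet set" where
  "step6 n f t so =
     (let st = fst so in
      if has_N n f (lS st) (lview st) then (enter_next t st, snd so) else so)"

text \<open>Step (7); if several blocks of view v have M-notarizations, the block b is
  chosen by the choice function ch.\<close>
definition step7 :: "nat \<Rightarrow> nat \<Rightarrow> nat \<Rightarrow> nat \<Rightarrow> (('tx, 'h) block set \<Rightarrow> ('tx, 'h) block)
                     \<Rightarrow> ('tx, 'h) lstate \<times> ('tx, 'h) packet set \<Rightarrow> ('tx, 'h) lstate \<times> ('tx, 'h) packet set" where
  "step7 n f t p ch so =
     (let st = fst so; S = lS st; v = lview st;
          Bs = {b \<in> blocks_in S. bview b = v \<and> has_M n f S b} in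
      if Bs \<noteq> {} then
        (let b = ch Bs;
             so' = (if lnotarized st = None \<and> \<not> lnullified st then bcast {(p, Vote b)} so else so)
         in (enter_next t (fst so'), snd so'))
      else so)"

definition step8 :: "nat \<Rightarrow> nat \<Rightarrow> nat
                     \<Rightarrow> ('tx, 'h) lstate \<times> ('tx, 'h) packet set \<Rightarrow> ('tx, 'h) lstate \<times> ('tx, 'h) packet set" where
  "step8 n f p so =
     (let st = fst so; S = lS st; v = lview st in
      case lnotarized st of
        None \<Rightarrow> so
      | Some nb \<Rightarrow>
          (if \<not> lnullified st \<and>
              2 * f + 1 \<le> card {q. q < n \<and> ((q, Nullify v) \<in> S \<or>
                                   (\<exists>b. bview b = v \<and> b \<noteq> nb \<and> (q, Vote b) \<in> S))}
           then bcast {(p, Nullify v)} (st\<lparr>lnullified := True\<rparr>, snd so)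
           else so))"

text \<open>Returns the state at the end of timeslot t and the set of packets sent to all.
  (Step (9), finalisation, only updates the log and is omitted.)\<close>
definition round ::
  "nat \<Rightarrow> nat \<Rightarrow> nat \<Rightarrow> (('tx::linorder, 'h::linorder) block \<Rightarrow> 'h) \<Rightarrow> nat \<Rightarrow> nat
   \<Rightarrow> ('tx set \<Rightarrow> 'tx set \<Rightarrow> 'tx list) \<Rightarrow> (('tx, 'h) block set \<Rightarrow> ('tx, 'h) block)
   \<Rightarrow> ('tx, 'h) lstate \<Rightarrow> ('tx, 'h) packet set \<Rightarrow> 'tx set
   \<Rightarrow> ('tx, 'h) lstate \<times> ('tx, 'h) packet set" where
  "round n f \<Delta> H p t mk_tr ch prev rcv txin =
     (let st0 = prev\<lparr>lS := lS prev \<union> \<Union> rcv, lrtx := lrtx prev \<union> txin\<rparr>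
      in (step8 n f p \<circ> step7 n f t p ch \<circ> step6 n f t \<circ> step5 \<Delta> t p \<circ> step4 n f H p
          \<circ> step3 n f H p mk_tr \<circ> step12 n f (lS prev)) (st0, {}))"

record ('tx, 'h) execution =
  ex_corrupt :: "nat \<Rightarrow> nat option"   \<comment> \<open>Some c: corrupted from timeslot c on; None: correct\<close>
  ex_sent :: "nat \<Rightarrow> nat \<Rightarrow> (nat \<times> ('tx, 'h) packet) set"  \<comment> \<open>sender, time: (recipient, packet)\<close>
  ex_recv :: "nat \<Rightarrow> nat \<Rightarrow> ('tx, 'h) packet set"          \<comment> \<open>receiver, time: packets delivered\<close>
  ex_txs :: "nat \<Rightarrow> nat \<Rightarrow> 'tx set"
  ex_state :: "nat \<Rightarrow> nat \<Rightarrow> ('tx, 'h) lstate"               \<comment> \<open>local state at end of timeslot\<close>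
  ex_mktr :: "nat \<Rightarrow> nat \<Rightarrow> 'tx set \<Rightarrow> 'tx set \<Rightarrow> 'tx list"
  ex_choice :: "nat \<Rightarrow> nat \<Rightarrow> ('tx, 'h) block set \<Rightarrow> ('tx, 'h) block"

definition uncorrupted_at :: "('tx, 'h) execution \<Rightarrow> nat \<Rightarrow> nat \<Rightarrow> bool" where
  "uncorrupted_at E p t \<longleftrightarrow> (case ex_corrupt E p of None \<Rightarrow> True | Some c \<Rightarrow> t < c)"

definition execution ::
  "nat \<Rightarrow> nat \<Rightarrow> nat \<Rightarrow> nat \<Rightarrow> (('tx::linorder, 'h::linorder) block \<Rightarrow> 'h) \<Rightarrow> ('tx, 'h) execution \<Rightarrow> bool" where
  "execution n f \<Delta> GST H E \<longleftrightarrow>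
     \<comment> \<open>no hash collisions\<close>
     inj H \<and>
     \<comment> \<open>at most f processors are ever corrupted\<close>
     card {p. p < n \<and> ex_corrupt E p \<noteq> None} \<le> f \<and>
     \<comment> \<open>only processors send/receive; finitely many finite well-formed packets\<close>
     (\<forall>p t. finite (ex_sent E p t) \<and> finite (ex_recv E p t) \<and> finite (ex_txs E p t)) \<and>
     (\<forall>p t q pk. (q, pk) \<in> ex_sent E p t \<longrightarrow>
        p < n \<and> q < n \<and> finite pk \<and> (\<forall>m \<in> pk. wf_msg n m)) \<and>
     \<comment> \<open>partial synchrony: every sent packet arrives at some t' with t < t' <= max GST t + Delta\<close>
     (\<forall>p t q pk. (q, pk) \<in> ex_sent E p t \<longrightarrow>
        (\<exists>t'. t < t' \<and> t' \<le> max GST t + \<Delta> \<and> pk \<in> ex_recv E q t')) \<and>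
     \<comment> \<open>only sent packets are delivered\<close>
     (\<forall>q t' pk. pk \<in> ex_recv E q t' \<longrightarrow> (\<exists>p t. t < t' \<and> (q, pk) \<in> ex_sent E p t)) \<and>
     \<comment> \<open>unforgeability: a message signed by s, sent at t while s is not corrupted, was sent by s\<close>
     (\<forall>p t q pk s pl. (q, pk) \<in> ex_sent E p t \<longrightarrow> (s, pl) \<in> pk \<longrightarrow> uncorrupted_at E s t \<longrightarrow>
        (\<exists>t' \<le> t. \<exists>q' pk'. (q', pk') \<in> ex_sent E s t' \<and> (s, pl) \<in> pk')) \<and>
     \<comment> \<open>every non-genesis block occurring in a message is signed by the leader of its view\<close>
     (\<forall>p t q pk m b. (q, pk) \<in> ex_sent E p t \<longrightarrow> m \<in> pk \<longrightarrow> b \<in> payload_blocks (snd m) \<longrightarrow>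
        b \<noteq> genesis \<longrightarrow>
        (\<exists>t' \<le> t. \<exists>p' q' pk'. (q', pk') \<in> ex_sent E p' t' \<and> (lead n (bview b), Prop b) \<in> pk')) \<and>
     \<comment> \<open>ProposeChild forms a sequence of distinct received transactions containing X\<close>
     (\<forall>p t R X. finite R \<longrightarrow> X \<subseteq> R \<longrightarrow>
        distinct (ex_mktr E p t R X) \<and> X \<subseteq> set (ex_mktr E p t R X) \<and> set (ex_mktr E p t R X) \<subseteq> R) \<and>
     (\<forall>p t Bs. Bs \<noteq> {} \<longrightarrow> ex_choice E p t Bs \<in> Bs) \<and>
     \<comment> \<open>processors follow the protocol while not corrupted\<close>
     (\<forall>p t. p < n \<longrightarrow> uncorrupted_at E p t \<longrightarrow>
        (let (st', out) = round n f \<Delta> H p t (ex_mktr E p t) (ex_choice E p t)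
                            (if t = 0 then init_state else ex_state E p (t - 1))
                            (ex_recv E p t) (ex_txs E p t)
         in ex_state E p t = st' \<and> ex_sent E p t = {(q, pk). q < n \<and> pk \<in> out}))"

definition sends_vote :: "('tx, 'h) execution \<Rightarrow> nat \<Rightarrow> ('tx, 'h) block \<Rightarrow> bool" where
  "sends_vote E p b \<longleftrightarrow> (\<exists>t q pk. (q, pk) \<in> ex_sent E p t \<and> (p, Vote b) \<in> pk)"

definition receives_M :: "nat \<Rightarrow> nat \<Rightarrow> ('tx, 'h) execution \<Rightarrow> ('tx, 'h) block \<Rightarrow> bool" where
  "receives_M n f E b \<longleftrightarrow> b = genesis \<or> 2 * f + 1 \<le> card {p. p < n \<and> sends_vote E p b}"

definition receives_L :: "nat \<Rightarrow> nat \<Rightarrow> ('tx, 'h) execution \<Rightarrow> ('tx, 'h) block \<Rightarrow> bool" where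
  "receives_L n f E b \<longleftrightarrow> b = genesis \<or> n - f \<le> card {p. p < n \<and> sends_vote E p b}"

end

theory Submission
  imports Defs
begin
declare split_paired_All[simp del] split_paired_Ex[simp del]

lemma least_subset_sub:
  assumes "finite P" "k \<le> card P"
  shows "least_subset P k \<subseteq> P"
proof -
  let ?C = "{Q. Q \<subseteq> P \<and> card Q = k}"
  have fin: "finite ?C" using assms(1) by (rule finite_subset[rotated, OF finite_Pow_iff[THEN iffD2]]) auto
  obtain T where "T \<subseteq> P" "card T = k" using obtain_subset_with_card_n[OF assms(2)] by blast
  hence ne: "?C \<noteq> {}" by blast
  have "arg_min_on sorted_list_of_set ?C \<in> ?C" by (rule arg_min_if_finite(1)[OF fin ne])
  thus ?thesis unfolding least_subset_def arg_min_on_def by simp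
qed

definition vinv :: "nat \<Rightarrow> ('tx,'h) lstate \<Rightarrow> bool" where
 "vinv p st \<longleftrightarrow> (\<forall>b. (p,Vote b) \<in> lS st \<longrightarrow> bview b < lview st \<or> (bview b = lview st \<and> lnotarized st = Some b))
   \<and> (\<forall>b b'. (p,Vote b) \<in> lS st \<longrightarrow> (p,Vote b') \<in> lS st \<longrightarrow> bview b = bview b' \<longrightarrow> b = b')"

definition J :: "nat \<Rightarrow> ('tx,'h) lstate \<times> ('tx,'h) packet set \<Rightarrow> bool" where
 "J p so \<longleftrightarrow> vinv p (fst so) \<and> (\<forall>pk\<in>snd so. \<forall>b. (p,Vote b) \<in> pk \<longrightarrow> (p,Vote b) \<in> lS (fst so))"

definition MO :: "('tx,'h) lstate \<times> ('tx,'h) packet set \<Rightarrow> ('tx,'h) lstate \<times> ('tx,'h) packet set \<Rightarrow> bool" where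
 "MO so so' \<longleftrightarrow> lS (fst so) \<subseteq> lS (fst so')"

lemma fin_vs: "finite (vote_signers n S b)" unfolding vote_signers_def by simp

lemma step12_J: "J p so \<Longrightarrow> J p (step12 n f Sprev so) \<and> MO so (step12 n f Sprev so)"
proof -
  assume a: "J p so"
  obtain st out where so: "so = (st, out)" by (cases so)
  let ?S = "lS st"
  have fs: "fst (step12 n f Sprev so) = st" unfolding step12_def Let_def so by simp
  have ss: "snd (step12 n f Sprev so) = out
     \<union> {(\<lambda>p. (p, Nullify v)) ` least_subset (null_signers n ?S v) (2 * f + 1) | v.
                  has_N n f ?S v \<and> \<not> has_N n f Sprev v}
     \<union> {(\<lambda>p. (p, Vote b)) ` least_subset (vote_signers n ?S b) (2 * f + 1) | b.
                  b \<noteq> genesis \<and> has_M n f ?S b \<and> \<not> has_M n f Sprev b}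
     \<union> {(\<lambda>p. (p, Vote b)) ` least_subset (vote_signers n ?S b) (n - f) | b.
                  b \<noteq> genesis \<and> has_L n f ?S b \<and> \<not> has_L n f Sprev b}"
    unfolding step12_def Let_def so by simp
  have "\<forall>pk\<in>snd (step12 n f Sprev so). \<forall>b. (p,Vote b) \<in> pk \<longrightarrow> (p,Vote b) \<in> ?S"
  proof (intro ballI allI impI)
    fix pk b assume pk: "pk \<in> snd (step12 n f Sprev so)" and v: "(p, Vote b) \<in> pk"
    from pk[unfolded ss] show "(p, Vote b) \<in> ?S"
    proof (elim UnE)
      assume "pk \<in> out" thus ?thesis using a v unfolding J_def so by simp
    next
      assume "pk \<in> {(\<lambda>p. (p, Nullify v)) ` least_subset (null_signers n ?S v) (2 * f + 1) | v.
                  has_N n f ?S v \<and> \<not> has_N n f Sprev v}"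
      thus ?thesis using v by blast
    next
      assume "pk \<in> {(\<lambda>p. (p, Vote b)) ` least_subset (vote_signers n ?S b) (2 * f + 1) | b.
                  b \<noteq> genesis \<and> has_M n f ?S b \<and> \<not> has_M n f Sprev b}"
      then obtain c where pk: "pk = (\<lambda>p. (p, Vote c)) ` least_subset (vote_signers n ?S c) (2 * f + 1)"
        and hm: "c \<noteq> genesis" "has_M n f ?S c" by blast
      have "2*f+1 \<le> card (vote_signers n ?S c)" using hm unfolding has_M_def by simp
      hence sub: "least_subset (vote_signers n ?S c) (2 * f + 1) \<subseteq> vote_signers n ?S c"
        by (rule least_subset_sub[OF fin_vs])
      from v pk have "b = c" "p \<in> least_subset (vote_signers n ?S c) (2 * f + 1)" by auto
      with sub show ?thesis unfolding vote_signers_def by auto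
    next
      assume "pk \<in> {(\<lambda>p. (p, Vote b)) ` least_subset (vote_signers n ?S b) (n - f) | b.
                  b \<noteq> genesis \<and> has_L n f ?S b \<and> \<not> has_L n f Sprev b}"
      then obtain c where pk: "pk = (\<lambda>p. (p, Vote c)) ` least_subset (vote_signers n ?S c) (n - f)"
        and hm: "c \<noteq> genesis" "has_L n f ?S c" by blast
      have "n - f \<le> card (vote_signers n ?S c)" using hm unfolding has_L_def by simp
      hence sub: "least_subset (vote_signers n ?S c) (n - f) \<subseteq> vote_signers n ?S c"
        by (rule least_subset_sub[OF fin_vs])
      from v pk have "b = c" "p \<in> least_subset (vote_signers n ?S c) (n - f)" by auto
      with sub show ?thesis unfolding vote_signers_def by auto
    qed
  qed
  moreover have "fst so = st" using so by simp
  ultimately show ?thesis using a fs unfolding J_def MO_def by simp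
qed



lemma vinv_cong:
  assumes "\<And>b. (p,Vote b) \<in> lS st' \<longleftrightarrow> (p,Vote b) \<in> lS st" "lview st' = lview st" "lnotarized st' = lnotarized st"
  shows "vinv p st' = vinv p st"
  unfolding vinv_def assms ..

lemma J_bcast_nv:
  assumes "J p (st,out)" "\<forall>b. (p,Vote b) \<notin> pk" "lS st' = lS st" "lview st' = lview st" "lnotarized st' = lnotarized st"
  shows "J p (bcast pk (st',out)) \<and> MO (st,out) (bcast pk (st',out))"
proof -
  have "vinv p (st'\<lparr>lS := lS st' \<union> pk\<rparr>) = vinv p st"
    by (rule vinv_cong) (use assms in auto)
  thus ?thesis using assms unfolding J_def bcast_def MO_def by auto
qed


lemma J_bcast_nv':
  assumes "J p so" "\<forall>b. (p,Vote b) \<notin> pk"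
  shows "J p (bcast pk so) \<and> MO so (bcast pk so)"
  using J_bcast_nv[of p "fst so" "snd so" pk "fst so"] assms by simp

lemma J_bcast_null:
  assumes "J p so"
  shows "J p (bcast {(p, Nullify v)} ((fst so)\<lparr>lnullified := True\<rparr>, snd so)) \<and>
         MO so (bcast {(p, Nullify v)} ((fst so)\<lparr>lnullified := True\<rparr>, snd so))"
  using J_bcast_nv[of p "fst so" "snd so" "{(p, Nullify v)}" "(fst so)\<lparr>lnullified := True\<rparr>"] assms by simp

lemma J_enter:
  assumes "J p (st, out)"
  shows "J p (enter_next t st, out) \<and> MO (st,out) (enter_next t st, out)"
proof -
  have v: "vinv p st" and o: "\<forall>pk\<in>out. \<forall>b. (p,Vote b) \<in> pk \<longrightarrow> (p,Vote b) \<in> lS st"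
    using assms unfolding J_def by auto
  have S: "lS (enter_next t st) = lS st" and V: "lview (enter_next t st) = Suc (lview st)"
    and N: "lnotarized (enter_next t st) = None" unfolding enter_next_def by simp_all
  have "vinv p (enter_next t st)"
    unfolding vinv_def S V N
  proof (intro conjI allI impI)
    fix b assume "(p, Vote b) \<in> lS st"
    hence "bview b \<le> lview st" using v unfolding vinv_def by fastforce
    thus "bview b < Suc (lview st) \<or> bview b = Suc (lview st) \<and> None = Some b" by simp
  next
    fix b b' assume "(p, Vote b) \<in> lS st" "(p, Vote b') \<in> lS st" "bview b = bview b'"
    thus "b = b'" using v unfolding vinv_def by blast
  qed
  thus ?thesis using o S unfolding J_def MO_def by simp
qed

lemma J_vote:
  assumes "J p (st, out)" "lnotarized st = None" "bview b0 = lview st"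
  shows "J p (bcast {(p, Vote b0)} (st\<lparr>lnotarized := Some b0\<rparr>, out)) \<and>
         MO (st, out) (bcast {(p, Vote b0)} (st\<lparr>lnotarized := Some b0\<rparr>, out))"
proof -
  have v: "vinv p st" and o: "\<forall>pk\<in>out. \<forall>b. (p,Vote b) \<in> pk \<longrightarrow> (p,Vote b) \<in> lS st"
    using assms unfolding J_def by auto
  have old: "bview b < lview st" if "(p, Vote b) \<in> lS st" for b
    using v that assms(2) unfolding vinv_def by fastforce
  let ?st = "st\<lparr>lnotarized := Some b0, lS := lS st \<union> {(p, Vote b0)}\<rparr>"
  have e: "bcast {(p, Vote b0)} (st\<lparr>lnotarized := Some b0\<rparr>, out) = (?st, insert {(p, Vote b0)} out)"
    unfolding bcast_def by simp
  have mem: "(p, Vote b) \<in> lS ?st \<longleftrightarrow> (p, Vote b) \<in> lS st \<or> b = b0" for b by auto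
  have "vinv p ?st"
    unfolding vinv_def
  proof (intro conjI allI impI)
    fix b assume "(p, Vote b) \<in> lS ?st"
    hence "(p, Vote b) \<in> lS st \<or> b = b0" using mem by blast
    thus "bview b < lview ?st \<or> bview b = lview ?st \<and> lnotarized ?st = Some b"
    proof
      assume "(p, Vote b) \<in> lS st" hence "bview b < lview st" by (rule old)
      thus ?thesis by simp
    next
      assume "b = b0" thus ?thesis using assms(3) by simp
    qed
  next
    fix b b' assume a1: "(p, Vote b) \<in> lS ?st" and a2: "(p, Vote b') \<in> lS ?st" and a3: "bview b = bview b'"
    from a1 have "(p, Vote b) \<in> lS st \<or> b = b0" using mem by blast
    moreover from a2 have "(p, Vote b') \<in> lS st \<or> b' = b0" using mem by blast
    ultimately show "b = b'" using old assms(3) a3 v unfolding vinv_def by fastforce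
  qed
  thus ?thesis unfolding e J_def MO_def using o by auto
qed

lemma MO_refl: "MO so so" unfolding MO_def by simp

lemma if_prop_bcast: "(if c then bcast {(q, Prop x)} so else so) = so \<or>
   (\<exists>pk. (\<forall>b. (p,Vote b) \<notin> pk) \<and> (if c then bcast {(q, Prop x)} so else so) = bcast pk so)"
proof (cases c)
  case True
  show ?thesis by (rule disjI2, rule exI[of _ "{(q, Prop x)}"]) (simp add: True)
qed simp

lemma step3_J: assumes "J p so" shows "J p (step3 n f H p mk so) \<and> MO so (step3 n f H p mk so)"
proof -
  have "step3 n f H p mk so = so \<or> (\<exists>pk. (\<forall>b. (p,Vote b) \<notin> pk) \<and> step3 n f H p mk so = bcast pk so)"
    unfolding step3_def Let_def by (rule if_prop_bcast)
  thus ?thesis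
  proof (elim disjE exE conjE)
    assume "step3 n f H p mk so = so" thus ?thesis using assms MO_refl by simp
  next
    fix pk assume "\<forall>b. (p,Vote b) \<notin> pk" "step3 n f H p mk so = bcast pk so"
    thus ?thesis using J_bcast_nv'[OF assms] by simp
  qed
qed
lemma step5_J: assumes "J p so" shows "J p (step5 D t p so) \<and> MO so (step5 D t p so)"
  using assms by (simp add: step5_def Let_def J_bcast_null[OF assms] MO_refl)

lemma step8_J: assumes "J p so" shows "J p (step8 n f p so) \<and> MO so (step8 n f p so)"
  using assms by (simp add: step8_def Let_def J_bcast_null[OF assms] MO_refl split: option.splits)

lemma step6_J: assumes "J p so" shows "J p (step6 n f t so) \<and> MO so (step6 n f t so)"
  using assms J_enter[of p "fst so" "snd so" t] by (simp add: step6_def Let_def MO_refl)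


lemma vp_view: "valid_proposal n f H S v b \<Longrightarrow> bview (THE b. valid_proposal n f H S v b) = v"
proof -
  assume a: "valid_proposal n f H S v b"
  have "\<exists>!b. valid_proposal n f H S v b" using a unfolding valid_proposal_def by blast
  from theI'[OF this] show ?thesis unfolding valid_proposal_def by blast
qed

lemma MO_trans: "MO a b \<Longrightarrow> MO b c \<Longrightarrow> MO a c" unfolding MO_def by blast

lemma step4_J: assumes "J p so" shows "J p (step4 n f H p so) \<and> MO so (step4 n f H p so)"
proof (cases "(\<exists>b. valid_proposal n f H (lS (fst so)) (lview (fst so)) b) \<and> lnotarized (fst so) = None \<and> \<not> lnullified (fst so)")
  case True
  then obtain b where vp: "valid_proposal n f H (lS (fst so)) (lview (fst so)) b" by blast
  define b0 where "b0 = (THE b. valid_proposal n f H (lS (fst so)) (lview (fst so)) b)"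
  have bv: "bview b0 = lview (fst so)" using vp_view[OF vp] b0_def by simp
  have e: "step4 n f H p so = bcast {(p, Vote b0)} ((fst so)\<lparr>lnotarized := Some b0\<rparr>, snd so)"
    using True unfolding step4_def Let_def b0_def by simp
  have J': "J p (fst so, snd so)" using assms by simp
  have nn: "lnotarized (fst so) = None" using True by simp
  show ?thesis using J_vote[OF J' nn bv] e by simp
next
  case False
  have "step4 n f H p so = so" unfolding step4_def Let_def by (rule if_not_P[OF False])
  thus ?thesis using assms MO_refl by simp
qed

lemma step7_J:
  assumes ch: "\<forall>Bs. Bs \<noteq> {} \<longrightarrow> ch Bs \<in> Bs" and a: "J p so"
  shows "J p (step7 n f t p ch so) \<and> MO so (step7 n f t p ch so)"
proof -
  define Bs where "Bs = {b \<in> blocks_in (lS (fst so)). bview b = lview (fst so) \<and> has_M n f (lS (fst so)) b}"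
  have J': "J p (fst so, snd so)" using a by simp
  show ?thesis
  proof (cases "Bs = {}")
    case True thus ?thesis using a MO_refl unfolding step7_def Let_def Bs_def[symmetric] by simp
  next
    case ne: False
    define b where "b = ch Bs"
    have "b \<in> Bs" using ch ne unfolding b_def by blast
    hence bv: "bview b = lview (fst so)" unfolding Bs_def by blast
    show ?thesis
    proof (cases "lnotarized (fst so) = None \<and> \<not> lnullified (fst so)")
      case True
      define Y where "Y = bcast {(p, Vote b)} ((fst so)\<lparr>lnotarized := Some b\<rparr>, snd so)"
      have JY: "J p Y \<and> MO (fst so, snd so) Y" unfolding Y_def
        using J_vote[OF J' _ bv] True by simp
      have JY': "J p (fst Y, snd Y)" using JY by simp
      have e: "step7 n f t p ch so = (enter_next t (fst Y), snd Y)"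
        using True ne unfolding step7_def Let_def Bs_def[symmetric] b_def[symmetric] Y_def
        by (simp add: bcast_def enter_next_def)
      show ?thesis using J_enter[OF JY', of t] JY e MO_trans by (metis prod.collapse)
    next
      case False
      have e: "step7 n f t p ch so = (enter_next t (fst so), snd so)"
        using False ne unfolding step7_def Let_def Bs_def[symmetric] b_def[symmetric] by auto
      show ?thesis using J_enter[OF J', of t] e by simp
    qed
  qed
qed


lemma round_J:
  assumes v: "vinv p prev" and r: "\<forall>b. (p,Vote b) \<in> \<Union>rcv \<longrightarrow> (p,Vote b) \<in> lS prev"
    and ch: "\<forall>Bs. Bs \<noteq> {} \<longrightarrow> ch Bs \<in> Bs"
    and e: "round n f D H p t mk ch prev rcv txin = (st', out)"
  shows "vinv p st' \<and> (\<forall>pk\<in>out. \<forall>b. (p,Vote b)\<in>pk \<longrightarrow> (p,Vote b) \<in> lS st') \<and> lS prev \<subseteq> lS st'"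
proof -
  define st0 where "st0 = prev\<lparr>lS := lS prev \<union> \<Union> rcv, lrtx := lrtx prev \<union> txin\<rparr>"
  have "vinv p st0 = vinv p prev"
    by (rule vinv_cong) (use r in \<open>auto simp: st0_def\<close>)
  hence J0: "J p (st0, {})" using v unfolding J_def by simp
  have M0: "lS prev \<subseteq> lS st0" unfolding st0_def by auto
  define s1 where "s1 = step12 n f (lS prev) (st0, {})"
  define s2 where "s2 = step3 n f H p mk s1"
  define s3 where "s3 = step4 n f H p s2"
  define s4 where "s4 = step5 D t p s3"
  define s5 where "s5 = step6 n f t s4"
  define s6 where "s6 = step7 n f t p ch s5"
  define s7 where "s7 = step8 n f p s6"
  have 1: "J p s1 \<and> MO (st0, {}) s1" unfolding s1_def by (rule step12_J[OF J0])
  have 2: "J p s2 \<and> MO s1 s2" unfolding s2_def by (rule step3_J) (use 1 in simp)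
  have 3: "J p s3 \<and> MO s2 s3" unfolding s3_def by (rule step4_J) (use 2 in simp)
  have 4: "J p s4 \<and> MO s3 s4" unfolding s4_def by (rule step5_J) (use 3 in simp)
  have 5: "J p s5 \<and> MO s4 s5" unfolding s5_def by (rule step6_J) (use 4 in simp)
  have 6: "J p s6 \<and> MO s5 s6" unfolding s6_def by (rule step7_J[OF ch]) (use 5 in simp)
  have 7: "J p s7 \<and> MO s6 s7" unfolding s7_def by (rule step8_J) (use 6 in simp)
  have "MO (st0, {}) s7" using 1 2 3 4 5 6 7 MO_trans by meson
  moreover have "s7 = (st', out)" using e unfolding round_def Let_def s7_def s6_def s5_def s4_def s3_def s2_def s1_def st0_def
    by simp
  ultimately show ?thesis using 7 M0 unfolding J_def MO_def by auto
qed


lemma ex_deliv: assumes "execution n f D GST H E" "pk \<in> ex_recv E q t'" shows "\<exists>p t. t < t' \<and> (q, pk) \<in> ex_sent E p t"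
proof -
  have "\<forall>q t' pk. pk \<in> ex_recv E q t' \<longrightarrow> (\<exists>p t. t < t' \<and> (q, pk) \<in> ex_sent E p t)"
    using assms(1) unfolding execution_def by (elim conjE) assumption
  thus ?thesis using assms(2) by blast
qed

lemma ex_unforge: assumes "execution n f D GST H E" "(q, pk) \<in> ex_sent E p t" "(s, pl) \<in> pk" "uncorrupted_at E s t"
  shows "\<exists>t' \<le> t. \<exists>q' pk'. (q', pk') \<in> ex_sent E s t' \<and> (s, pl) \<in> pk'"
proof -
  have "\<forall>p t q pk s pl. (q, pk) \<in> ex_sent E p t \<longrightarrow> (s, pl) \<in> pk \<longrightarrow> uncorrupted_at E s t \<longrightarrow>
        (\<exists>t' \<le> t. \<exists>q' pk'. (q', pk') \<in> ex_sent E s t' \<and> (s, pl) \<in> pk')"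
    using assms(1) unfolding execution_def by (elim conjE) assumption
  thus ?thesis using assms(2-) by blast
qed

lemma ex_choice: assumes "execution n f D GST H E" shows "\<forall>Bs. Bs \<noteq> {} \<longrightarrow> ex_choice E p t Bs \<in> Bs"
proof -
  have "\<forall>p t Bs. Bs \<noteq> {} \<longrightarrow> ex_choice E p t Bs \<in> Bs"
    using assms(1) unfolding execution_def by (elim conjE) assumption
  thus ?thesis by blast
qed

lemma ex_card: assumes "execution n f D GST H E" shows "card {p. p < n \<and> ex_corrupt E p \<noteq> None} \<le> f"
  using assms(1) unfolding execution_def by (elim conjE) assumption

lemma ex_wf: assumes "execution n f D GST H E" "(q, pk) \<in> ex_sent E p t" "m \<in> pk" shows "wf_msg n m"
proof -
  have "\<forall>p t q pk. (q, pk) \<in> ex_sent E p t \<longrightarrow>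
        p < n \<and> q < n \<and> finite pk \<and> (\<forall>m \<in> pk. wf_msg n m)"
    using assms(1) unfolding execution_def by (elim conjE) assumption
  thus ?thesis using assms(2-) by blast
qed

lemma ex_round: assumes "execution n f D GST H E" "p < n" "uncorrupted_at E p t"
  shows "\<exists>out. round n f D H p t (ex_mktr E p t) (ex_choice E p t)
                            (if t = 0 then init_state else ex_state E p (t - 1))
                            (ex_recv E p t) (ex_txs E p t) = (ex_state E p t, out)
      \<and> ex_sent E p t = {(q, pk). q < n \<and> pk \<in> out}"
proof -
  have "\<forall>p t. p < n \<longrightarrow> uncorrupted_at E p t \<longrightarrow>
        (let (st', out) = round n f D H p t (ex_mktr E p t) (ex_choice E p t)
                            (if t = 0 then init_state else ex_state E p (t - 1))
                            (ex_recv E p t) (ex_txs E p t)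
         in ex_state E p t = st' \<and> ex_sent E p t = {(q, pk). q < n \<and> pk \<in> out})"
    using assms(1) unfolding execution_def by (elim conjE) assumption
  hence "let (st', out) = round n f D H p t (ex_mktr E p t) (ex_choice E p t)
                            (if t = 0 then init_state else ex_state E p (t - 1))
                            (ex_recv E p t) (ex_txs E p t)
         in ex_state E p t = st' \<and> ex_sent E p t = {(q, pk). q < n \<and> pk \<in> out}" using assms(2,3) by blast
  moreover obtain st' out where e: "round n f D H p t (ex_mktr E p t) (ex_choice E p t)
                            (if t = 0 then init_state else ex_state E p (t - 1))
                            (ex_recv E p t) (ex_txs E p t) = (st', out)" by (metis surj_pair)
  ultimately have "ex_state E p t = st' \<and> ex_sent E p t = {(q, pk). q < n \<and> pk \<in> out}"
    by (simp only: Let_def prod.case)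
  thus ?thesis using e by (intro exI[of _ out]) simp
qed

lemma mono_chain: "(\<And>s. Suc s < t \<Longrightarrow> A s \<subseteq> A (Suc s)) \<Longrightarrow> a \<le> b \<Longrightarrow> b < t \<Longrightarrow> A a \<subseteq> (A b :: 'x set)"
proof (induction b)
  case 0 thus ?case by simp
next
  case (Suc b) thus ?case by (cases "a = Suc b") (auto simp: le_Suc_eq)
qed

lemma init_vinv: "vinv p init_state" unfolding vinv_def init_state_def by simp

lemma main_inv:
  assumes ex: "execution n f D GST H E" and pn: "p < n" and cor: "ex_corrupt E p = None"
  shows "vinv p (ex_state E p t) \<and> (\<forall>q pk b. (q,pk) \<in> ex_sent E p t \<longrightarrow> (p,Vote b) \<in> pk \<longrightarrow> (p,Vote b) \<in> lS (ex_state E p t))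
     \<and> lS (if t = 0 then init_state else ex_state E p (t - 1)) \<subseteq> lS (ex_state E p t)"
proof (induction t rule: less_induct)
  case (less t)
  have unc: "uncorrupted_at E p t'" for t' using cor unfolding uncorrupted_at_def by simp
  define prev where "prev = (if t = 0 then init_state else ex_state E p (t - 1))"
  have vprev: "vinv p prev"
  proof (cases "t = 0")
    case True thus ?thesis unfolding prev_def using init_vinv by simp
  next
    case False thus ?thesis unfolding prev_def using less[of "t - 1"] by simp
  qed
  have mono: "lS (ex_state E p a) \<subseteq> lS (ex_state E p b)" if "a \<le> b" "b < t" for a b
  proof (rule mono_chain[where t = t, OF _ that])
    fix s assume "Suc s < t"
    thus "lS (ex_state E p s) \<subseteq> lS (ex_state E p (Suc s))" using less[of "Suc s"] by simp
  qed
  have r: "\<forall>b. (p,Vote b) \<in> \<Union>(ex_recv E p t) \<longrightarrow> (p,Vote b) \<in> lS prev"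
  proof (intro allI impI)
    fix b assume "(p, Vote b) \<in> \<Union>(ex_recv E p t)"
    then obtain pk where pk: "pk \<in> ex_recv E p t" "(p, Vote b) \<in> pk" by blast
    obtain p0 t0 where t0: "t0 < t" "(p, pk) \<in> ex_sent E p0 t0" using ex_deliv[OF ex pk(1)] by blast
    obtain t' q' pk' where t': "t' \<le> t0" "(q', pk') \<in> ex_sent E p t'" "(p, Vote b) \<in> pk'"
      using ex_unforge[OF ex t0(2) pk(2) unc] by blast
    have "(p, Vote b) \<in> lS (ex_state E p t')" using less[of t'] t0 t' by auto
    moreover have "lS (ex_state E p t') \<subseteq> lS (ex_state E p (t - 1))" using mono t0 t' by simp
    moreover have "prev = ex_state E p (t - 1)" using t0 unfolding prev_def by simp
    ultimately show "(p, Vote b) \<in> lS prev" by blast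
  qed
  obtain out where ro: "round n f D H p t (ex_mktr E p t) (ex_choice E p t) prev
                            (ex_recv E p t) (ex_txs E p t) = (ex_state E p t, out)"
      and se: "ex_sent E p t = {(q, pk). q < n \<and> pk \<in> out}"
    using ex_round[OF ex pn unc] unfolding prev_def by blast
  have "vinv p (ex_state E p t) \<and> (\<forall>pk\<in>out. \<forall>b. (p,Vote b)\<in>pk \<longrightarrow> (p,Vote b) \<in> lS (ex_state E p t)) \<and> lS prev \<subseteq> lS (ex_state E p t)"
    by (rule round_J[OF vprev r ex_choice[OF ex] ro])
  thus ?case using se unfolding prev_def by auto
qed


lemma state_mono:
  assumes ex: "execution n f D GST H E" and pn: "p < n" and cor: "ex_corrupt E p = None" and ab: "a \<le> b"
  shows "lS (ex_state E p a) \<subseteq> lS (ex_state E p b)"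
proof (rule mono_chain[where t = "Suc b", OF _ ab])
  fix s assume "Suc s < Suc b"
  show "lS (ex_state E p s) \<subseteq> lS (ex_state E p (Suc s))" using main_inv[OF ex pn cor, of "Suc s"] by simp
qed simp

lemma sends_in_S:
  assumes ex: "execution n f D GST H E" and pn: "p < n" and cor: "ex_corrupt E p = None" and sv: "sends_vote E p b"
  shows "\<exists>t. (p, Vote b) \<in> lS (ex_state E p t)"
proof -
  obtain t q pk where "(q, pk) \<in> ex_sent E p t" "(p, Vote b) \<in> pk" using sv unfolding sends_vote_def by blast
  thus ?thesis using main_inv[OF ex pn cor, of t] by blast
qed

lemma correct_unique:
  assumes ex: "execution n f D GST H E" and pn: "p < n" and cor: "ex_corrupt E p = None"
    and s1: "sends_vote E p b" and s2: "sends_vote E p b'" and v: "bview b = bview b'"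
  shows "b = b'"
proof -
  obtain t1 where t1: "(p, Vote b) \<in> lS (ex_state E p t1)" using sends_in_S[OF ex pn cor s1] by blast
  obtain t2 where t2: "(p, Vote b') \<in> lS (ex_state E p t2)" using sends_in_S[OF ex pn cor s2] by blast
  have "(p, Vote b) \<in> lS (ex_state E p (max t1 t2))" using t1 state_mono[OF ex pn cor, of t1 "max t1 t2"] by auto
  moreover have "(p, Vote b') \<in> lS (ex_state E p (max t1 t2))" using t2 state_mono[OF ex pn cor, of t2 "max t1 t2"] by auto
  moreover have "vinv p (ex_state E p (max t1 t2))" using main_inv[OF ex pn cor] by blast
  ultimately show ?thesis using v unfolding vinv_def by blast
qed

lemma no_vote_view0:
  assumes ex: "execution n f D GST H E" and v: "bview b = 0" and ng: "b \<noteq> genesis"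
  shows "\<not> sends_vote E p b"
proof
  assume "sends_vote E p b"
  then obtain t q pk where "(q, pk) \<in> ex_sent E p t" "(p, Vote b) \<in> pk" unfolding sends_vote_def by blast
  hence "wf_msg n (p, Vote b)" by (rule ex_wf[OF ex])
  hence "wf_block b" unfolding wf_msg_def by simp
  thus False using v ng unfolding wf_block_def by simp
qed

theorem lemma2:
  fixes n f \<Delta> GST :: nat
    and H :: "('tx::linorder, 'h::linorder) block \<Rightarrow> 'h"
    and E :: "('tx, 'h) execution"
    and b :: "('tx, 'h) block"
  assumes "5 * f + 1 \<le> n"
    and "execution n f \<Delta> GST H E"
    and "receives_L n f E b"
  shows "\<not> (\<exists>b'. b' \<noteq> b \<and> bview b' = bview b \<and> receives_M n f E b')"
proof
  assume "\<exists>b'. b' \<noteq> b \<and> bview b' = bview b \<and> receives_M n f E b'"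
  then obtain b' where bb: "b' \<noteq> b" and vv: "bview b' = bview b" and rm: "receives_M n f E b'" by blast
  note ex = assms(2)
  define A where "A = {p. p < n \<and> sends_vote E p b}"
  define B where "B = {p. p < n \<and> sends_vote E p b'}"
  define Bad where "Bad = {p. p < n \<and> ex_corrupt E p \<noteq> None}"
  have g0: "bview genesis = 0" unfolding genesis_def bview_def by simp
  show False
  proof (cases "b = genesis")
    case True
    hence "B = {}" using no_vote_view0[OF ex, of b'] vv bb g0 unfolding B_def by auto
    moreover have "2 * f + 1 \<le> card B" using rm bb True unfolding receives_M_def B_def by simp
    ultimately show False by simp
  next
    case bng: False
    show False
    proof (cases "b' = genesis")
      case True
      hence "bview b = 0" using vv g0 by metis
      hence "A = {}" using no_vote_view0[OF ex _ bng] unfolding A_def by blast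
      moreover have "n - f \<le> card A" using assms(3) bng unfolding receives_L_def A_def by simp
      ultimately show False using assms(1) by simp
    next
      case False
      have cA: "n - f \<le> card A" using assms(3) bng unfolding receives_L_def A_def by simp
      have cB: "2 * f + 1 \<le> card B" using rm False unfolding receives_M_def B_def by simp
      have fA: "finite A" and fB: "finite B" unfolding A_def B_def by simp_all
      have "A \<inter> B \<subseteq> Bad"
      proof
        fix p assume "p \<in> A \<inter> B"
        hence pn: "p < n" and s1: "sends_vote E p b" and s2: "sends_vote E p b'" unfolding A_def B_def by auto
        have "ex_corrupt E p \<noteq> None"
        proof
          assume "ex_corrupt E p = None"
          from correct_unique[OF ex pn this s1 s2] vv bb show False by simp
        qed
        thus "p \<in> Bad" using pn unfolding Bad_def by simp
      qed
      hence "card (A \<inter> B) \<le> card Bad" by (rule card_mono[rotated]) (simp add: Bad_def)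
      also have "\<dots> \<le> f" unfolding Bad_def by (rule ex_card[OF ex])
      finally have i: "card (A \<inter> B) \<le> f" .
      have "A \<union> B \<subseteq> {..<n}" unfolding A_def B_def by auto
      hence u: "card (A \<union> B) \<le> n" using card_mono[of "{..<n}" "A \<union> B"] by simp
      have "card A + card B = card (A \<union> B) + card (A \<inter> B)" by (rule card_Un_Int[OF fA fB])
      thus False using cA cB i u assms(1) by linarith
    qed
  qed
qed

end
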